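(* Let $\varepsilon>0$ and $\mathcal{K}_\varepsilon=\{x\in\mathbb{R}^{|\mathcal{A}|}:x_i+\varepsilon\le x_{i+1}\text{ for }i=1,\dots,|\mathcal{A}|-1\}$. Consider the modification of MultiQT in which the forecast is $q_t=\Pi_{\mathcal{K}_\varepsilon}(b_t+\tilde\theta_t)$ and the hidden offsets are updated by $\tilde\theta_{t+1}^{\alpha}=\tilde\theta_t^{\alpha}-\eta(\mathbb{1}\{y_t\le q_t^{\alpha}\}-\alpha)$ for each $\alpha\in\mathcal{A}$. There exist a set of levels $\mathcal{A}$ and a sequence $(y_t,b_t)$ with $|y_t-b_t^{\alpha}|<R$ for all $\alpha,t$ (for some $R>0$) such that for some $\alpha\in\mathcal{A}$, $\lim_{T\to\infty}\frac1T\sum_{t=1}^T\mathbb{1}\{y_t\le q_t^{\alpha}\}\ne\alpha$.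
   Context: $\mathcal{A}=\{\alpha_1<\dots<\alpha_m\}\subset(0,1)$ is a set of quantile levels, $\eta>0$ a learning rate, base forecasts $b_t$ have nondecreasing entries, and $\Pi_C$ denotes Euclidean projection onto a closed convex set $C$. *)

theory Defs
  imports "HOL-Analysis.Analysis"
begin

(* Vectors in R^m are represented as functions nat => real; only indices i < m matter.
   Index i (0-based) corresponds to the level alpha_{i+1}. *)

definition Keps :: "real \<Rightarrow> nat \<Rightarrow> (nat \<Rightarrow> real) set" where
  "Keps \<epsilon> m = {z. (\<forall>i. Suc i < m \<longrightarrow> z i + \<epsilon> \<le> z (Suc i)) \<and> (\<forall>i. m \<le> i \<longrightarrow> z i = 0)}"

definition sqdist :: "nat \<Rightarrow> (nat \<Rightarrow> real) \<Rightarrow> (nat \<Rightarrow> real) \<Rightarrow> real" where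
  "sqdist m x z = (\<Sum>i<m. (x i - z i)^2)"

(* Euclidean projection onto K_eps (a nonempty closed convex subset of R^m) *)
definition projK :: "real \<Rightarrow> nat \<Rightarrow> (nat \<Rightarrow> real) \<Rightarrow> (nat \<Rightarrow> real)" where
  "projK \<epsilon> m x = (THE z. z \<in> Keps \<epsilon> m \<and> (\<forall>w\<in>Keps \<epsilon> m. sqdist m x z \<le> sqdist m x w))"

(* hidden offsets of the modified MultiQT, initialised at 0;
   mqt_theta eps eta m alpha y b t  is  theta_{t+1} (time shifted to start at 0) *)
primrec mqt_theta :: "real \<Rightarrow> real \<Rightarrow> nat \<Rightarrow> (nat \<Rightarrow> real) \<Rightarrow> (nat \<Rightarrow> real)
    \<Rightarrow> (nat \<Rightarrow> nat \<Rightarrow> real) \<Rightarrow> nat \<Rightarrow> (nat \<Rightarrow> real)" where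
  "mqt_theta \<epsilon> \<eta> m \<alpha> y b 0 = (\<lambda>i. 0)"
| "mqt_theta \<epsilon> \<eta> m \<alpha> y b (Suc t) =
     (let q = projK \<epsilon> m (\<lambda>i. b t i + mqt_theta \<epsilon> \<eta> m \<alpha> y b t i)
      in (\<lambda>i. mqt_theta \<epsilon> \<eta> m \<alpha> y b t i
               - \<eta> * ((if y t \<le> q i then 1 else 0) - \<alpha> i)))"

definition mqt_q :: "real \<Rightarrow> real \<Rightarrow> nat \<Rightarrow> (nat \<Rightarrow> real) \<Rightarrow> (nat \<Rightarrow> real)
    \<Rightarrow> (nat \<Rightarrow> nat \<Rightarrow> real) \<Rightarrow> nat \<Rightarrow> (nat \<Rightarrow> real)" where
  "mqt_q \<epsilon> \<eta> m \<alpha> y b t = projK \<epsilon> m (\<lambda>i. b t i + mqt_theta \<epsilon> \<eta> m \<alpha> y b t i)"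

end

theory Submission
  imports Defs
begin

definition zst :: "real \<Rightarrow> nat \<Rightarrow> real" where
  "zst e = (\<lambda>i. if i = 0 then - e/2 else if i = 1 then e/2 else 0)"

lemma zst_K: "e > 0 \<Longrightarrow> zst e \<in> Keps e 2"
  unfolding Keps_def zst_def by auto

lemma proj_key:
  assumes e: "e > 0" and c: "c \<ge> 0" and x0: "x 0 = c" and x1: "x 1 = - c"
  shows "projK e 2 x = zst e"
  unfolding projK_def
proof (rule the_equality)
  have sz: "sqdist 2 x (zst e) = 2 * (c + e/2)^2"
    unfolding sqdist_def zst_def by (simp add: numeral_2_eq_2 x0 x1[simplified] power2_eq_square algebra_simps)
  have sw: "sqdist 2 x w = (c - w 0)^2 + (c + w 1)^2" for w
    unfolding sqdist_def by (simp add: numeral_2_eq_2 x0 x1[simplified] power2_eq_square algebra_simps)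
  show "zst e \<in> Keps e 2 \<and> (\<forall>w\<in>Keps e 2. sqdist 2 x (zst e) \<le> sqdist 2 x w)"
  proof (intro conjI ballI)
    show "zst e \<in> Keps e 2" using zst_K e .
    fix w assume "w \<in> Keps e 2"
    then have h: "w 0 + e \<le> w 1" unfolding Keps_def by auto
    show "sqdist 2 x (zst e) \<le> sqdist 2 x w"
    proof -
      have "(c - w 0 + (c + w 1))^2 \<ge> (2*c+e)^2" using h c e by (intro power_mono) auto
      moreover have "((c - w 0) - (c + w 1))^2 \<ge> 0" by simp
      ultimately show ?thesis unfolding sz sw[of w] by (simp add: power2_eq_square algebra_simps)
    qed
  qed
  fix z assume H: "z \<in> Keps e 2 \<and> (\<forall>w\<in>Keps e 2. sqdist 2 x z \<le> sqdist 2 x w)"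
  then have zK: "z 0 + e \<le> z 1" "\<forall>i\<ge>2. z i = 0" unfolding Keps_def by auto
  have "sqdist 2 x z \<le> sqdist 2 x (zst e)" using H zst_K e by auto
  then have le: "(c - z 0)^2 + (c + z 1)^2 \<le> 2 * (c + e/2)^2" unfolding sz sw[of z] .
  define u where "u = c - z 0"
  define v where "v = c + z 1"
  have uv: "u + v \<ge> 2*c + e" using zK u_def v_def by simp
  have le2: "u^2 + v^2 \<le> 2 * (c + e/2)^2" using le u_def v_def by simp
  have "(u - v)^2 \<le> 0"
  proof -
    have "(u+v)^2 \<ge> (2*c+e)^2" using uv c e by (intro power_mono) auto
    then show ?thesis using le2 by (simp add: power2_eq_square algebra_simps)
  qed
  then have "u = v" by simp
  then have "u = c + e/2"
  proof -
    assume "u = v"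
    have "(u+v)^2 \<ge> (2*c+e)^2" using uv c e by (intro power_mono) auto
    then have "4*u^2 \<ge> 4*(c+e/2)^2" using \<open>u = v\<close> by (simp add: power2_eq_square algebra_simps)
    then have "u^2 = (c+e/2)^2" using le2 \<open>u = v\<close> by simp
    moreover have "u \<ge> 0" using uv \<open>u = v\<close> c e by simp
    ultimately show ?thesis using c e by (simp add: power2_eq_iff)
  qed
  then have "z 0 = - e/2" "z 1 = e/2" using \<open>u = v\<close> u_def v_def by auto
  then show "z = zst e" using zK unfolding zst_def by (auto intro!: ext)
qed

theorem proposition14:
  fixes \<epsilon> \<eta> :: real
  assumes "\<epsilon> > 0" and "\<eta> > 0"
  shows "\<exists>(m::nat) (\<alpha>::nat \<Rightarrow> real) (y::nat \<Rightarrow> real) (b::nat \<Rightarrow> nat \<Rightarrow> real) (R::real).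
           m \<ge> 1 \<and>
           (\<forall>i<m. 0 < \<alpha> i \<and> \<alpha> i < 1) \<and>
           (\<forall>i. Suc i < m \<longrightarrow> \<alpha> i < \<alpha> (Suc i)) \<and>
           (\<forall>t i. Suc i < m \<longrightarrow> b t i \<le> b t (Suc i)) \<and>
           R > 0 \<and> (\<forall>t. \<forall>i<m. \<bar>y t - b t i\<bar> < R) \<and>
           (\<exists>i<m. \<not> ((\<lambda>T. (\<Sum>t<T. if y t \<le> mqt_q \<epsilon> \<eta> m \<alpha> y b t i then 1 else 0) / real T)
                         \<longlonglongrightarrow> \<alpha> i))"
proof -
  define \<alpha> :: "nat \<Rightarrow> real" where "\<alpha> = (\<lambda>i. if i = 0 then 1/4 else 3/4)"
  define y :: "nat \<Rightarrow> real" where "y = (\<lambda>t. 0)"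
  define b :: "nat \<Rightarrow> nat \<Rightarrow> real" where "b = (\<lambda>t i. 0)"
  have inv: "mqt_theta \<epsilon> \<eta> 2 \<alpha> y b t 0 = real t * \<eta> / 4 \<and>
             mqt_theta \<epsilon> \<eta> 2 \<alpha> y b t 1 = - (real t * \<eta> / 4)" for t
  proof (induction t)
    case 0 then show ?case by simp
  next
    case (Suc t)
    have "projK \<epsilon> 2 (\<lambda>i. b t i + mqt_theta \<epsilon> \<eta> 2 \<alpha> y b t i) = zst \<epsilon>"
      using Suc assms by (intro proj_key[where c = "real t * \<eta> / 4"]) (auto simp: b_def)
    then have P: "projK \<epsilon> 2 (\<lambda>i. b t i + mqt_theta \<epsilon> \<eta> 2 \<alpha> y b t i) 0 = - \<epsilon>/2"
       "projK \<epsilon> 2 (\<lambda>i. b t i + mqt_theta \<epsilon> \<eta> 2 \<alpha> y b t i) 1 = \<epsilon>/2"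
      by (simp_all add: zst_def)
    have n1: "\<not> (0::real) \<le> - \<epsilon>/2" using assms by simp
    have n2: "(0::real) \<le> \<epsilon>/2" using assms by simp
    have A: "mqt_theta \<epsilon> \<eta> 2 \<alpha> y b (Suc t) 0 = mqt_theta \<epsilon> \<eta> 2 \<alpha> y b t 0 + \<eta> / 4"
      using P(1) n1 by (simp add: Let_def y_def \<alpha>_def del: mqt_theta.simps(2)) (simp add: Let_def y_def \<alpha>_def)
    have B: "mqt_theta \<epsilon> \<eta> 2 \<alpha> y b (Suc t) 1 = mqt_theta \<epsilon> \<eta> 2 \<alpha> y b t 1 - \<eta> / 4"
      using P(2) n2 by (simp add: Let_def y_def \<alpha>_def del: mqt_theta.simps(2)) (simp add: Let_def y_def \<alpha>_def)
    show ?case using Suc.IH A B by (simp add: distrib_right add_divide_distrib)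
  qed
  have q: "mqt_q \<epsilon> \<eta> 2 \<alpha> y b t = zst \<epsilon>" for t
    unfolding mqt_q_def using inv[of t] assms
    by (intro proj_key[where c = "real t * \<eta> / 4"]) (auto simp: b_def)
  have ev: "(\<lambda>T. (\<Sum>t<T. if y t \<le> mqt_q \<epsilon> \<eta> 2 \<alpha> y b t 0 then 1 else 0) / real T) = (\<lambda>T. 0::real)"
    using assms unfolding q by (simp add: zst_def y_def)
  have nc: "\<not> ((\<lambda>T. (\<Sum>t<T. if y t \<le> mqt_q \<epsilon> \<eta> 2 \<alpha> y b t 0 then 1 else 0) / real T)
                         \<longlonglongrightarrow> \<alpha> 0)"
  proof
    assume "(\<lambda>T. (\<Sum>t<T. if y t \<le> mqt_q \<epsilon> \<eta> 2 \<alpha> y b t 0 then 1 else 0) / real T)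
                         \<longlonglongrightarrow> \<alpha> 0"
    then have "(\<lambda>T. 0::real) \<longlonglongrightarrow> 1/4" unfolding ev by (simp add: \<alpha>_def)
    then have "(0::real) = 1/4" using LIMSEQ_unique tendsto_const by blast
    then show False by simp
  qed
  show ?thesis
    apply (rule exI[of _ 2], rule exI[of _ \<alpha>], rule exI[of _ y], rule exI[of _ b], rule exI[of _ 1])
    using nc by (auto simp: \<alpha>_def b_def y_def)
qed

end
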